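(* Let $(S,d)$ be a metric space, let $\mu$ be a finite signed Borel measure on $S$ that is separable (i.e. there is a separable $S_0\subset S$ with $|\mu|(S_0)=|\mu|(S)$), and let $\bullet\in\{\mathrm{FM},\mathrm{BL}\}$. Then there exists $f^\bullet_\mu\in\operatorname{ext}(B^S_\bullet)$ such that $\|\mu\|^*_\bullet=\int_S f^\bullet_\mu\,d\mu$.
   Context: $\mathrm{BL}(S)$ is the space of bounded real-valued Lipschitz functions on $S$, $|f|_L=\sup_{x\neq y}|f(x)-f(y)|/d(x,y)$, $\|f\|_{\mathrm{BL}}=\|f\|_\infty+|f|_L$, $\|f\|_{\mathrm{FM}}=\max(\|f\|_\infty,|f|_L)$, $B^S_\bullet=\{f\in\mathrm{BL}(S):\|f\|_\bullet\le1\}$, $\operatorname{ext}$ denotes the set of extreme points, $|\mu|$ is the total variation of $\mu$, and $\|\mu\|^*_\bullet=\sup_{f\in B^S_\bullet}\int_S f\,d\mu$. *)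

theory Defs
  imports "HOL-Analysis.Analysis"
begin

definition BL_fun :: "('a::metric_space \<Rightarrow> real) \<Rightarrow> bool" where
  "BL_fun f \<longleftrightarrow> bounded (range f) \<and> (\<exists>L. \<forall>x y. \<bar>f x - f y\<bar> \<le> L * dist x y)"

definition sup_norm :: "('a \<Rightarrow> real) \<Rightarrow> real" where
  "sup_norm f = (SUP x. \<bar>f x\<bar>)"

definition lip_seminorm :: "('a::metric_space \<Rightarrow> real) \<Rightarrow> real" where
  "lip_seminorm f = (if (UNIV :: 'a set) = {} \<or> (\<forall>x y::'a. x = y) then 0
     else (SUP p\<in>{(x,y). x \<noteq> y}. \<bar>f (fst p) - f (snd p)\<bar> / dist (fst p) (snd p)))"

datatype norm_kind = FM | BL

definition bl_norm :: "norm_kind \<Rightarrow> ('a::metric_space \<Rightarrow> real) \<Rightarrow> real" where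
  "bl_norm k f = (case k of
      BL \<Rightarrow> sup_norm f + lip_seminorm f
    | FM \<Rightarrow> max (sup_norm f) (lip_seminorm f))"

definition unit_ball :: "norm_kind \<Rightarrow> ('a::metric_space \<Rightarrow> real) set" where
  "unit_ball k = {f. BL_fun f \<and> bl_norm k f \<le> 1}"

definition ext_pts :: "('a \<Rightarrow> real) set \<Rightarrow> ('a \<Rightarrow> real) set" where
  "ext_pts B = {f \<in> B. \<forall>g\<in>B. \<forall>h\<in>B. \<forall>t::real. 0 < t \<and> t < 1 \<and>
       f = (\<lambda>x. t * g x + (1 - t) * h x) \<longrightarrow> g = h}"

text \<open>A finite signed Borel measure is represented by its Jordan decomposition
  (Mp, Mn): two finite Borel measures that are mutually singular.\<close>
definition signed_borel_jordan :: "'a::metric_space measure \<Rightarrow> 'a measure \<Rightarrow> bool" where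
  "signed_borel_jordan Mp Mn \<longleftrightarrow>
     sets Mp = sets borel \<and> sets Mn = sets borel \<and>
     finite_measure Mp \<and> finite_measure Mn \<and>
     (\<exists>P\<in>sets borel. emeasure Mp (UNIV - P) = 0 \<and> emeasure Mn P = 0)"

definition total_variation :: "'a measure \<Rightarrow> 'a measure \<Rightarrow> 'a set \<Rightarrow> real" where
  "total_variation Mp Mn A = measure Mp A + measure Mn A"

definition signed_integral :: "'a measure \<Rightarrow> 'a measure \<Rightarrow> ('a \<Rightarrow> real) \<Rightarrow> real" where
  "signed_integral Mp Mn f = integral\<^sup>L Mp f - integral\<^sup>L Mn f"

definition separable_signed :: "'a::metric_space measure \<Rightarrow> 'a measure \<Rightarrow> bool" where
  "separable_signed Mp Mn \<longleftrightarrow>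
     (\<exists>S0\<in>sets borel. separable_space (subtopology euclidean S0) \<and>
        total_variation Mp Mn S0 = total_variation Mp Mn UNIV)"

definition dual_norm :: "norm_kind \<Rightarrow> 'a::metric_space measure \<Rightarrow> 'a measure \<Rightarrow> real" where
  "dual_norm k Mp Mn = (SUP f\<in>unit_ball k. signed_integral Mp Mn f)"

end

theory Submission
  imports Defs
begin


definition L1 :: "('a::metric_space \<Rightarrow> real) set" where
  "L1 = {f. (\<forall>x. \<bar>f x\<bar> \<le> 1) \<and> (\<forall>x y. \<bar>f x - f y\<bar> \<le> dist x y)}"

definition KBL :: "('a::metric_space \<Rightarrow> real) set" where
  "KBL = {f. (\<forall>x. \<bar>f x\<bar> \<le> 1) \<and> (\<forall>x y z. \<bar>f x\<bar> * dist y z + \<bar>f y - f z\<bar> \<le> dist y z)}"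

definition Kc :: "norm_kind \<Rightarrow> ('a::metric_space \<Rightarrow> real) set" where
  "Kc k = (case k of FM \<Rightarrow> L1 | BL \<Rightarrow> KBL)"

lemma KBL_L1: "KBL \<subseteq> L1"
proof
  fix f :: "'a \<Rightarrow> real" assume "f \<in> KBL"
  then have a: "\<forall>x. \<bar>f x\<bar> \<le> 1" and b: "\<forall>x y z. \<bar>f x\<bar> * dist y z + \<bar>f y - f z\<bar> \<le> dist y z"
    unfolding KBL_def by auto
  have "\<bar>f y - f z\<bar> \<le> dist y z" for y z
  proof -
    have "0 \<le> \<bar>f y\<bar> * dist y z" by simp
    then show ?thesis using b[rule_format, of y y z] by linarith
  qed
  then show "f \<in> L1" using a unfolding L1_def by auto
qed

lemma Kc_L1: "Kc k \<subseteq> L1"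
  using KBL_L1 by (cases k) (auto simp: Kc_def)

lemma sup_norm_le:
  assumes "bounded (range f)" shows "\<bar>f x\<bar> \<le> sup_norm f"
proof -
  have "bdd_above (range (\<lambda>x. \<bar>f x\<bar>))"
    using assms unfolding bounded_iff bdd_above_def by (auto simp: image_iff)
  then show ?thesis unfolding sup_norm_def by (rule cSUP_upper[OF UNIV_I])
qed

lemma lip_le:
  fixes f :: "'a::metric_space \<Rightarrow> real"
  assumes "\<exists>L. \<forall>x y. \<bar>f x - f y\<bar> \<le> L * dist x y" "y \<noteq> z"
  shows "\<bar>f y - f z\<bar> / dist y z \<le> lip_seminorm f" "0 \<le> lip_seminorm f"
proof -
  obtain L where L: "\<forall>x y. \<bar>f x - f y\<bar> \<le> L * dist x y" using assms by auto
  have nd: "\<not> ((UNIV :: 'a set) = {} \<or> (\<forall>x y::'a. x = y))" using assms(2) by auto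
  have bdd: "bdd_above ((\<lambda>p. \<bar>f (fst p) - f (snd p)\<bar> / dist (fst p) (snd p)) ` {(x,y). x \<noteq> y})"
  proof (rule bdd_aboveI2)
    fix p :: "'a \<times> 'a" assume "p \<in> {(x,y). x \<noteq> y}"
    then have "dist (fst p) (snd p) > 0" by auto
    then show "\<bar>f (fst p) - f (snd p)\<bar> / dist (fst p) (snd p) \<le> L"
      using L by (simp add: divide_le_eq)
  qed
  have "\<bar>f y - f z\<bar> / dist y z \<le> (SUP p\<in>{(x,y). x \<noteq> y}. \<bar>f (fst p) - f (snd p)\<bar> / dist (fst p) (snd p))"
    using cSUP_upper[OF _ bdd, of "(y,z)"] assms(2) by auto
  then show "\<bar>f y - f z\<bar> / dist y z \<le> lip_seminorm f" using nd unfolding lip_seminorm_def by auto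
  then show "0 \<le> lip_seminorm f" by (meson divide_nonneg_nonneg abs_ge_zero zero_le_dist order_trans)
qed

lemma lip_degen: "(\<forall>x y::'a. x = y) \<Longrightarrow> lip_seminorm (f::'a::metric_space \<Rightarrow> real) = 0"
  unfolding lip_seminorm_def by simp

lemma unit_ball_sub: "unit_ball k \<subseteq> Kc k"
proof
  fix f :: "'a \<Rightarrow> real" assume "f \<in> unit_ball k"
  then have bl: "BL_fun f" and n: "bl_norm k f \<le> 1" unfolding unit_ball_def by auto
  have bd: "bounded (range f)" and lipL: "\<exists>L. \<forall>x y. \<bar>f x - f y\<bar> \<le> L * dist x y"
    using bl unfolding BL_fun_def by auto
  have sx: "\<bar>f x\<bar> \<le> sup_norm f" for x using sup_norm_le[OF bd] .
  have lip0: "0 \<le> lip_seminorm f"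
    using lip_le(2)[OF lipL] lip_degen[of f] by (cases "\<forall>x y::'a. x = y") auto
  have rat: "\<bar>f y - f z\<bar> \<le> lip_seminorm f * dist y z" for y z
  proof (cases "y = z")
    case False
    then have "dist y z > 0" by simp
    with lip_le(1)[OF lipL False] show ?thesis by (simp add: divide_le_eq mult.commute)
  qed simp
  show "f \<in> Kc k"
  proof (cases k)
    case FM
    then have "sup_norm f \<le> 1" "lip_seminorm f \<le> 1" using n by (auto simp: bl_norm_def)
    then have "\<forall>x. \<bar>f x\<bar> \<le> 1" "\<forall>y z. \<bar>f y - f z\<bar> \<le> dist y z"
      using sx rat by (auto intro: order_trans mult_right_le_one_le[of _ "dist _ _"])
        (metis mult_right_mono zero_le_dist mult_1 order_trans rat)
    then show ?thesis using FM by (simp add: Kc_def L1_def)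
  next
    case BL
    then have s: "sup_norm f + lip_seminorm f \<le> 1" using n by (auto simp: bl_norm_def)
    have "\<bar>f x\<bar> \<le> 1" for x using sx[of x] s lip0 by linarith
    moreover have "\<bar>f x\<bar> * dist y z + \<bar>f y - f z\<bar> \<le> dist y z" for x y z
    proof -
      have "\<bar>f x\<bar> + lip_seminorm f \<le> 1" using sx[of x] s by linarith
      then have "(\<bar>f x\<bar> + lip_seminorm f) * dist y z \<le> 1 * dist y z"
        by (rule mult_right_mono) simp
      then show ?thesis using rat[of y z] by (simp add: algebra_simps)
    qed
    ultimately show ?thesis using BL by (simp add: Kc_def KBL_def)
  qed
qed

lemma L1_BL_fun: "f \<in> L1 \<Longrightarrow> BL_fun f"
  unfolding L1_def BL_fun_def bounded_iff
  by (auto intro!: exI[of _ 1])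

lemma sup_norm_bound: "(\<And>x. \<bar>f x\<bar> \<le> c) \<Longrightarrow> sup_norm f \<le> c"
  unfolding sup_norm_def by (rule cSUP_least) auto

lemma lip_bound:
  fixes f :: "'a::metric_space \<Rightarrow> real"
  assumes "\<And>y z. \<bar>f y - f z\<bar> \<le> c * dist y z" "0 \<le> c"
  shows "lip_seminorm f \<le> c"
proof (cases "\<forall>x y::'a. x = y")
  case True then show ?thesis using lip_degen[OF True, of f] assms by simp
next
  case False
  have "(SUP p\<in>{(x,y). x \<noteq> y}. \<bar>f (fst p) - f (snd p)\<bar> / dist (fst p) (snd p)) \<le> c"
  proof (rule cSUP_least)
    show "{(x,y). x \<noteq> (y::'a)} \<noteq> {}" using False by auto
    fix p :: "'a \<times> 'a" assume "p \<in> {(x,y). x \<noteq> y}"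
    then have "dist (fst p) (snd p) > 0" by auto
    then show "\<bar>f (fst p) - f (snd p)\<bar> / dist (fst p) (snd p) \<le> c"
      using assms(1) by (simp add: divide_le_eq)
  qed
  then show ?thesis using False unfolding lip_seminorm_def by auto
qed

lemma unit_ball_sup: "Kc k \<subseteq> unit_ball k"
proof
  fix f :: "'a \<Rightarrow> real" assume f: "f \<in> Kc k"
  then have "f \<in> L1" using Kc_L1 by auto
  then have bl: "BL_fun f" and a: "\<And>x. \<bar>f x\<bar> \<le> 1" and l: "\<And>y z. \<bar>f y - f z\<bar> \<le> dist y z"
    using L1_BL_fun unfolding L1_def by auto
  have "bl_norm k f \<le> 1"
  proof (cases k)
    case FM
    have "sup_norm f \<le> 1" by (rule sup_norm_bound) (rule a)
    moreover have "lip_seminorm f \<le> 1" by (rule lip_bound) (use l in auto)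
    ultimately show ?thesis using FM by (simp add: bl_norm_def)
  next
    case BL
    then have b: "\<And>x y z. \<bar>f x\<bar> * dist y z + \<bar>f y - f z\<bar> \<le> dist y z"
      using f by (auto simp: Kc_def KBL_def)
    have lb: "lip_seminorm f \<le> 1 - \<bar>f x\<bar>" for x
      by (rule lip_bound) (use b[of x] a[of x] in \<open>auto simp: algebra_simps\<close>)
    have "\<bar>f x\<bar> \<le> 1 - lip_seminorm f" for x using lb[of x] by linarith
    then have "sup_norm f \<le> 1 - lip_seminorm f"
      by (rule sup_norm_bound)
    then show ?thesis using BL by (simp add: bl_norm_def)
  qed
  then show "f \<in> unit_ball k" using bl unfolding unit_ball_def by auto
qed

lemma unit_ball_eq: "unit_ball k = Kc k"
  using unit_ball_sub unit_ball_sup by blast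



lemma cont_eval: "continuous_on UNIV (\<lambda>f::'a \<Rightarrow> real. f x)"
  by simp

lemma closed_L1: "closed (L1 :: ('a::metric_space \<Rightarrow> real) set)"
proof -
  have eq: "L1 = {f::'a\<Rightarrow>real. \<forall>x. \<bar>f x\<bar> \<le> 1} \<inter> {f. \<forall>x y. \<bar>f x - f y\<bar> \<le> dist x y}"
    unfolding L1_def by auto
  have c1: "closed {f::'a\<Rightarrow>real. \<forall>x. \<bar>f x\<bar> \<le> 1}"
    by (intro closed_Collect_all closed_Collect_le continuous_intros cont_eval)
  have c2: "closed {f::'a\<Rightarrow>real. \<forall>x y. \<bar>f x - f y\<bar> \<le> dist x y}"
    by (intro closed_Collect_all closed_Collect_le continuous_intros cont_eval)
  show ?thesis unfolding eq by (rule closed_Int[OF c1 c2])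
qed

lemma closed_KBL: "closed (KBL :: ('a::metric_space \<Rightarrow> real) set)"
proof -
  have eq: "KBL = {f::'a\<Rightarrow>real. \<forall>x. \<bar>f x\<bar> \<le> 1} \<inter> {f. \<forall>x y z. \<bar>f x\<bar> * dist y z + \<bar>f y - f z\<bar> \<le> dist y z}"
    unfolding KBL_def by auto
  have c1: "closed {f::'a\<Rightarrow>real. \<forall>x. \<bar>f x\<bar> \<le> 1}"
    by (intro closed_Collect_all closed_Collect_le continuous_intros cont_eval)
  have c2: "closed {f::'a\<Rightarrow>real. \<forall>x y z. \<bar>f x\<bar> * dist y z + \<bar>f y - f z\<bar> \<le> dist y z}"
    by (intro closed_Collect_all closed_Collect_le continuous_intros cont_eval)
  show ?thesis unfolding eq by (rule closed_Int[OF c1 c2])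
qed

lemma closed_Kc: "closed (Kc k :: ('a::metric_space \<Rightarrow> real) set)"
  using closed_L1 closed_KBL by (cases k) (auto simp: Kc_def)

lemma compact_cube: "compact {f::'a \<Rightarrow> real. \<forall>x. f x \<in> {-1..1}}"
proof -
  have "compactin (product_topology (\<lambda>_::'a. euclidean) UNIV) (PiE UNIV (\<lambda>_. {-1..1::real}))"
    by (subst compactin_PiE) auto
  then have "compact (PiE UNIV (\<lambda>_::'a. {-1..1::real}))"
    by (simp add: euclidean_product_topology compactin_euclidean_iff)
  moreover have "PiE UNIV (\<lambda>_::'a. {-1..1::real}) = {f::'a \<Rightarrow> real. \<forall>x. f x \<in> {-1..1}}"
    by (auto simp: PiE_def Pi_def extensional_def)
  ultimately show ?thesis by simp
qed

lemma compact_Kc: "compact (Kc k :: ('a::metric_space \<Rightarrow> real) set)"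
proof -
  have "Kc k \<subseteq> {f::'a \<Rightarrow> real. \<forall>x. f x \<in> {-1..1}}"
    using Kc_L1 unfolding L1_def by (auto simp: abs_le_iff)
  then have "Kc k = {f::'a \<Rightarrow> real. \<forall>x. f x \<in> {-1..1}} \<inter> Kc k" by auto
  then show ?thesis using compact_Int_closed[OF compact_cube closed_Kc] by metis
qed



definition extr :: "('a \<Rightarrow> real) set \<Rightarrow> ('a \<Rightarrow> real) set \<Rightarrow> bool" where
  "extr K G \<longleftrightarrow> (\<forall>g\<in>K. \<forall>h\<in>K. \<forall>t::real. 0 < t \<and> t < 1 \<and> (\<lambda>x. t * g x + (1 - t) * h x) \<in> G
      \<longrightarrow> g \<in> G \<and> h \<in> G)"

lemma comb_ge:
  fixes a b m t :: real
  assumes "0 < t" "t < 1" "a \<le> m" "b \<le> m" "m \<le> t * a + (1 - t) * b"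
  shows "m \<le> a \<and> m \<le> b"
proof (rule ccontr)
  assume "\<not> (m \<le> a \<and> m \<le> b)"
  then consider "a < m" | "b < m" by linarith
  then show False
  proof cases
    case 1
    have "t * a < t * m" using 1 assms by simp
    moreover have "(1 - t) * b \<le> (1 - t) * m" using assms by (intro mult_left_mono) auto
    ultimately show False using assms(5) by (simp add: algebra_simps)
  next
    case 2
    have "(1 - t) * b < (1 - t) * m" using 2 assms by simp
    moreover have "t * a \<le> t * m" using assms by (intro mult_left_mono) auto
    ultimately show False using assms(5) by (simp add: algebra_simps)
  qed
qed

lemma minimal_closed_extr:
  fixes K F :: "('a \<Rightarrow> real) set"
  assumes "compact F" "closed F" "F \<noteq> {}" "extr K F"
  shows "\<exists>M. M \<subseteq> F \<and> closed M \<and> M \<noteq> {} \<and> extr K M \<and>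
     (\<forall>X. X \<subseteq> F \<and> closed X \<and> X \<noteq> {} \<and> extr K X \<and> X \<subseteq> M \<longrightarrow> X = M)"
proof -
  define A where "A = {G. G \<subseteq> F \<and> closed G \<and> G \<noteq> {} \<and> extr K G}"
  have FA: "F \<in> A" using assms unfolding A_def by auto
  have lb: "\<exists>L\<in>A. \<forall>X\<in>C. L \<subseteq> X" if ch: "subset.chain A C" for C
  proof (cases "C = {}")
    case True then show ?thesis using FA by blast
  next
    case False
    then obtain G0 where G0: "G0 \<in> C" by auto
    have CA: "C \<subseteq> A" using ch by (simp add: subset_chain_def)
    have "F \<inter> \<Inter>C \<noteq> {}"
    proof (rule compact_imp_fip[OF assms(1)])
      show "closed T" if "T \<in> C" for T using that CA unfolding A_def by auto
      fix F' assume fin: "finite F'" and sub: "F' \<subseteq> C"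
      show "F \<inter> \<Inter>F' \<noteq> {}"
      proof (cases "F' = {}")
        case True then show ?thesis using assms by auto
      next
        case False
        have cc: "\<forall>X\<in>C. \<forall>Y\<in>C. X \<subseteq> Y \<or> Y \<subseteq> X" using ch by (simp add: subset_chain_def)
        have f1: "F' \<subseteq> A" using sub CA by (rule order_trans)
        have f2: "\<forall>X\<in>F'. \<forall>Y\<in>F'. X \<subseteq> Y \<or> Y \<subseteq> X"
        proof (intro ballI)
          fix X Y assume "X \<in> F'" "Y \<in> F'"
          then have "X \<in> C" "Y \<in> C" using sub by (auto dest: subsetD)
          then show "X \<subseteq> Y \<or> Y \<subseteq> X" using cc by blast
        qed
        have "subset.chain A F'" unfolding subset_chain_def using f1 f2 by (intro conjI)
        then have "\<Inter>F' \<in> F'" using Inter_in_chain[OF fin False] by blast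
        then have "\<Inter>F' \<in> A" using sub CA by blast
        then show ?thesis unfolding A_def by blast
      qed
    qed
    moreover have "\<Inter>C \<subseteq> F" using G0 CA unfolding A_def by blast
    moreover have "closed (\<Inter>C)" using CA unfolding A_def by (intro closed_Inter) blast
    moreover have "extr K (\<Inter>C)"
      unfolding extr_def
    proof (intro ballI allI impI)
      fix g h t assume g: "g \<in> K" and h: "h \<in> K"
        and ct: "0 < t \<and> t < 1 \<and> (\<lambda>x. t * g x + (1 - t) * h x) \<in> \<Inter>C"
      have "g \<in> G \<and> h \<in> G" if G: "G \<in> C" for G
      proof -
        have "extr K G" using CA G unfolding A_def by blast
        moreover have "(\<lambda>x. t * g x + (1 - t) * h x) \<in> G" using ct G by blast
        ultimately show ?thesis using g h ct unfolding extr_def by blast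
      qed
      then show "g \<in> \<Inter>C \<and> h \<in> \<Inter>C" by blast
    qed
    moreover have "\<Inter>C \<noteq> {}" using calculation(1) by blast
    ultimately have "\<Inter>C \<in> A" unfolding A_def mem_Collect_eq by (intro conjI)
    moreover have "\<forall>X\<in>C. \<Inter>C \<subseteq> X" by (simp add: Inter_lower)
    ultimately show ?thesis by (intro bexI[of _ "\<Inter>C"])
  qed
  have "\<exists>M\<in>uminus ` A. \<forall>X\<in>uminus ` A. M \<subseteq> X \<longrightarrow> X = M"
  proof (rule subset_Zorn)
    fix C assume ch: "subset.chain (uminus ` A) C"
    have c1: "C \<subseteq> uminus ` A" and c2: "\<forall>X\<in>C. \<forall>Y\<in>C. X \<subseteq> Y \<or> Y \<subseteq> X"
      using ch by (simp_all add: subset_chain_def)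
    have s1: "uminus ` C \<subseteq> A"
    proof
      fix Z assume "Z \<in> uminus ` C"
      then obtain X where X: "X \<in> C" "Z = - X" by (rule imageE) simp
      have "X \<in> uminus ` A" using c1 X(1) by (rule subsetD)
      then obtain Y where "Y \<in> A" "X = - Y" by (rule imageE) simp
      then show "Z \<in> A" using X by simp
    qed
    have s2: "\<forall>X\<in>uminus ` C. \<forall>Y\<in>uminus ` C. X \<subseteq> Y \<or> Y \<subseteq> X"
    proof (intro ballI)
      fix X Y assume xC: "X \<in> uminus ` C" and yC: "Y \<in> uminus ` C"
      obtain X' where X': "X' \<in> C" "X = - X'" using xC by (rule imageE) simp
      obtain Y' where Y': "Y' \<in> C" "Y = - Y'" using yC by (rule imageE) simp
      have "X' \<subseteq> Y' \<or> Y' \<subseteq> X'" using c2 X'(1) Y'(1) by simp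
      then show "X \<subseteq> Y \<or> Y \<subseteq> X" unfolding X'(2) Y'(2) Compl_subset_Compl_iff by (rule disj_commute[THEN iffD1])
    qed
    have "subset.chain A (uminus ` C)"
      using s1 s2 by (simp add: subset_chain_def)
    then obtain L where LA: "L \<in> A" and Ll: "\<forall>X\<in>uminus ` C. L \<subseteq> X" using lb by blast
    have "\<forall>X\<in>C. X \<subseteq> - L"
    proof
      fix X assume "X \<in> C"
      then have "- X \<in> uminus ` C" by (rule imageI)
      then have "L \<subseteq> - X" using Ll by (rule bspec[rotated])
      then show "X \<subseteq> - L" by blast
    qed
    moreover have "- L \<in> uminus ` A" using LA by (rule imageI)
    ultimately show "\<exists>U\<in>uminus ` A. \<forall>X\<in>C. X \<subseteq> U" by (intro bexI[of _ "- L"])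
  qed
  then obtain M' where M'A: "M' \<in> uminus ` A" and M'max: "\<forall>X\<in>uminus ` A. M' \<subseteq> X \<longrightarrow> X = M'"
    by blast
  then obtain M where MA: "M \<in> A" and MM: "M' = - M" by blast
  have Mmin: "\<forall>X\<in>A. X \<subseteq> M \<longrightarrow> X = M"
  proof (intro ballI impI)
    fix X assume XA: "X \<in> A" and XM: "X \<subseteq> M"
    have a1: "- X \<in> uminus ` A" using XA by (rule imageI)
    have a2: "M' \<subseteq> - X" using XM unfolding MM by simp
    have "M' \<subseteq> - X \<longrightarrow> - X = M'" using M'max a1 by (rule bspec)
    then have "- X = M'" using a2 by (rule mp)
    then show "X = M" unfolding MM by simp
  qed
  have P1: "M \<subseteq> F \<and> closed M \<and> M \<noteq> {} \<and> extr K M" using MA unfolding A_def by simp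
  have P2: "\<forall>X. X \<subseteq> F \<and> closed X \<and> X \<noteq> {} \<and> extr K X \<and> X \<subseteq> M \<longrightarrow> X = M"
  proof (intro allI impI)
    fix X assume H: "X \<subseteq> F \<and> closed X \<and> X \<noteq> {} \<and> extr K X \<and> X \<subseteq> M"
    then have "X \<in> A" unfolding A_def by simp
    then show "X = M" using Mmin H by simp
  qed
  show ?thesis using P1 P2 by (intro exI[of _ M] conjI) simp_all
qed

lemma extreme_exists:
  fixes K F :: "('a \<Rightarrow> real) set"
  assumes "compact F" "closed F" "F \<noteq> {}" "extr K F"
  shows "\<exists>f\<in>F. \<forall>g\<in>K. \<forall>h\<in>K. \<forall>t. 0 < t \<and> t < 1 \<and> f = (\<lambda>x. t * g x + (1 - t) * h x) \<longrightarrow> g = h"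
proof -
  obtain M where H: "M \<subseteq> F \<and> closed M \<and> M \<noteq> {} \<and> extr K M \<and>
     (\<forall>X. X \<subseteq> F \<and> closed X \<and> X \<noteq> {} \<and> extr K X \<and> X \<subseteq> M \<longrightarrow> X = M)"
    using minimal_closed_extr[OF assms] by (elim exE)
  have MF: "M \<subseteq> F" and Mc: "closed M" and Mne: "M \<noteq> {}" and Me: "extr K M"
    using H by simp_all
  have Mmin: "X = M" if "X \<subseteq> F" "closed X" "X \<noteq> {}" "extr K X" "X \<subseteq> M" for X
    using H that by simp
  obtain f0 where f0: "f0 \<in> M" using Mne by auto
  have Mcomp: "compact M"
  proof -
    have "F \<inter> M = M" using MF by auto
    then show ?thesis using compact_Int_closed[OF assms(1) Mc] by simp
  qed
  have single: "f' = f0" if f': "f' \<in> M" for f'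
  proof (rule ccontr)
    assume "f' \<noteq> f0"
    then obtain x where x: "f' x \<noteq> f0 x" by auto
    have "continuous_on M (\<lambda>f::'a\<Rightarrow>real. f x)"
      by (rule continuous_on_subset[OF cont_eval]) simp
    then obtain m where m: "m \<in> M" and mmax: "\<forall>y\<in>M. y x \<le> m x"
      using continuous_attains_sup[OF Mcomp Mne] by blast
    define G where "G = M \<inter> {g. m x \<le> g x}"
    have Gc: "closed G" unfolding G_def
      by (intro closed_Int Mc closed_Collect_le continuous_intros cont_eval)
    have Ge: "extr K G"
      unfolding extr_def
    proof (intro ballI allI impI)
      fix g h t assume g: "g \<in> K" and h: "h \<in> K" and ct: "0 < t \<and> t < 1 \<and> (\<lambda>x. t * g x + (1 - t) * h x) \<in> G"
      then have gh: "g \<in> M" "h \<in> M" using Me unfolding extr_def G_def by auto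
      have "m x \<le> t * g x + (1 - t) * h x" using ct unfolding G_def by auto
      moreover have "g x \<le> m x" "h x \<le> m x" using mmax gh by simp_all
      ultimately have "m x \<le> g x \<and> m x \<le> h x"
        using comb_ge[of t "g x" "m x" "h x"] ct by blast
      then show "g \<in> G \<and> h \<in> G" using gh unfolding G_def by auto
    qed
    have GM: "G \<subseteq> M" unfolding G_def by blast
    have "m \<in> G" using m unfolding G_def by simp
    then have "G \<noteq> {}" by blast
    moreover have "G \<subseteq> F" using GM MF by (rule order_trans)
    ultimately have "G = M" using Mmin[of G] Gc Ge GM by blast
    then have "f0 \<in> G" "f' \<in> G" using f0 f' by simp_all
    then have "m x \<le> f0 x" "m x \<le> f' x" unfolding G_def by simp_all
    moreover have "f0 x \<le> m x" "f' x \<le> m x" using mmax f0 f' by simp_all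
    ultimately show False using x by linarith
  qed
  show ?thesis
  proof (intro bexI[of _ f0] ballI allI impI)
    show "f0 \<in> F" using f0 MF by auto
    fix g h t assume g: "g \<in> K" and h: "h \<in> K" and ct: "0 < t \<and> t < 1 \<and> f0 = (\<lambda>x. t * g x + (1 - t) * h x)"
    then have "g \<in> M" "h \<in> M" using Me f0 unfolding extr_def by auto
    then show "g = h" using single by auto
  qed
qed



lemma L1_cont: "f \<in> L1 \<Longrightarrow> continuous_on UNIV (f :: 'a::metric_space \<Rightarrow> real)"
  unfolding continuous_on_iff L1_def
proof (intro ballI allI impI)
  fix x :: 'a and e :: real
  assume f: "f \<in> {f. (\<forall>x. \<bar>f x\<bar> \<le> 1) \<and> (\<forall>x y. \<bar>f x - f y\<bar> \<le> dist x y)}" and e: "0 < e"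
  show "\<exists>d>0. \<forall>x'\<in>UNIV. dist x' x < d \<longrightarrow> dist (f x') (f x) < e"
  proof (intro exI[of _ e] conjI ballI impI)
    fix x' assume "dist x' x < e"
    moreover have "\<bar>f x' - f x\<bar> \<le> dist x' x" using f by simp
    ultimately show "dist (f x') (f x) < e" by (simp add: dist_real_def)
  qed (rule e)
qed

lemma L1_meas:
  assumes "f \<in> L1" "sets M = sets (borel :: 'a::metric_space measure)"
  shows "(f :: 'a \<Rightarrow> real) \<in> borel_measurable M"
proof -
  have "f \<in> borel_measurable borel" using L1_cont[OF assms(1)] by (rule borel_measurable_continuous_onI)
  then show ?thesis by (subst measurable_cong_sets[OF assms(2) refl])
qed

lemma L1_integrable:
  assumes "finite_measure M" "f \<in> L1" "sets M = sets (borel :: 'a::metric_space measure)"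
  shows "integrable M (f :: 'a \<Rightarrow> real)"
proof -
  have "AE x in M. norm (f x) \<le> 1" using assms(2) unfolding L1_def by simp
  then show ?thesis
    using finite_measure.integrable_const_bound[OF assms(1)] L1_meas[OF assms(2,3)] by blast
qed

lemma L1_int_cont:
  fixes M :: "'a::metric_space measure" and S0 :: "'a set" and s :: "nat \<Rightarrow> 'a"
  assumes fm: "finite_measure M" and sM: "sets M = sets borel"
    and ae: "AE x in M. x \<in> S0"
    and dense: "\<And>x d. x \<in> S0 \<Longrightarrow> 0 < d \<Longrightarrow> \<exists>i. dist x (s i) < d"
  shows "continuous_on L1 (\<lambda>f. integral\<^sup>L M f)"
  unfolding continuous_on_topological
proof (intro ballI allI impI)
  fix f :: "'a \<Rightarrow> real" and B :: "real set"
  assume f: "f \<in> L1" and B: "open B" and fB: "integral\<^sup>L M f \<in> B"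
  obtain e where e: "e > 0" and eB: "ball (integral\<^sup>L M f) e \<subseteq> B"
    using B fB open_contains_ball by blast
  show "\<exists>A. open A \<and> f \<in> A \<and> (\<forall>y\<in>L1. y \<in> A \<longrightarrow> integral\<^sup>L M y \<in> B)"
  proof (rule ccontr)
    assume nA: "\<not> ?thesis"
    define U where "U n = (\<Inter>i\<in>{..<n}. {g::'a\<Rightarrow>real. \<bar>g (s i) - f (s i)\<bar> < 1 / Suc n})" for n
    have "open (U n)" for n
      unfolding U_def
      by (intro open_INT finite_lessThan ballI open_Collect_less continuous_intros cont_eval)
    moreover have "f \<in> U n" for n unfolding U_def by simp
    ultimately have "\<exists>g\<in>L1. g \<in> U n \<and> integral\<^sup>L M g \<notin> B" for n using nA by blast
    then obtain g where gL: "\<And>n. g n \<in> L1" and gU: "\<And>n. g n \<in> U n" and gB: "\<And>n. integral\<^sup>L M (g n) \<notin> B"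
      by metis
    have far: "e \<le> dist (integral\<^sup>L M (g n)) (integral\<^sup>L M f)" for n
      using gB[of n] eB unfolding subset_iff mem_ball by (metis dist_commute not_le)
    have pw: "(\<lambda>n. g n x) \<longlonglongrightarrow> f x" if x: "x \<in> S0" for x
    proof (rule LIMSEQ_I)
      fix r :: real assume r: "0 < r"
      obtain i where i: "dist x (s i) < r / 3" using dense[OF x] r by (metis divide_pos_pos zero_less_numeral)
      obtain N0 where N0: "1 / Suc N0 < r / 3" using r
        by (metis divide_pos_pos nat_approx_posE zero_less_numeral)
      show "\<exists>N. \<forall>n\<ge>N. norm (g n x - f x) < r"
      proof (intro exI[of _ "max N0 (Suc i)"] allI impI)
        fix n assume n: "max N0 (Suc i) \<le> n"
        then have "i < n" by simp
        then have "\<bar>g n (s i) - f (s i)\<bar> < 1 / Suc n" using gU[of n] unfolding U_def by blast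
        moreover have "1 / real (Suc n) \<le> 1 / Suc N0" using n by (simp add: frac_le)
        moreover have "\<bar>g n x - g n (s i)\<bar> \<le> dist x (s i)" using gL[of n] unfolding L1_def by simp
        moreover have "\<bar>f (s i) - f x\<bar> \<le> dist (s i) x" using f unfolding L1_def by simp
        moreover have "dist (s i) x = dist x (s i)" by (rule dist_commute)
        ultimately show "norm (g n x - f x) < r" using i N0 unfolding real_norm_def by linarith
      qed
    qed
    have "(\<lambda>n. integral\<^sup>L M (g n)) \<longlonglongrightarrow> integral\<^sup>L M f"
    proof (rule integral_dominated_convergence[where w = "\<lambda>_. 1"])
      show "f \<in> borel_measurable M" using L1_meas[OF f sM] .
      show "g n \<in> borel_measurable M" for n using L1_meas[OF gL sM] .
      show "integrable M (\<lambda>_. 1::real)" using fm by (simp add: finite_measure.integrable_const)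
      show "AE x in M. (\<lambda>n. g n x) \<longlonglongrightarrow> f x" using ae by eventually_elim (rule pw)
      show "AE x in M. norm (g n x) \<le> 1" for n using gL[of n] unfolding L1_def by simp
    qed
    then obtain N where "\<forall>n\<ge>N. dist (integral\<^sup>L M (g n)) (integral\<^sup>L M f) < e"
      using e by (metis lim_sequentially)
    then show False using far[of N] by auto
  qed
qed

lemma AE_S0:
  fixes M :: "'a::metric_space measure"
  assumes fm: "finite_measure M" and sM: "sets M = sets borel" and S0: "S0 \<in> sets borel"
    and eq: "measure M S0 = measure M UNIV"
  shows "AE x in M. x \<in> S0"
proof -
  have sp: "space M = UNIV" using sets_eq_imp_space_eq[OF sM] by simp
  have S0M: "S0 \<in> sets M" using S0 sM by simp
  have UM: "UNIV \<in> sets M" using sets.top[of M] sp by simp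
  have "measure M (UNIV - S0) = measure M UNIV - measure M S0"
    using finite_measure.finite_measure_Diff[OF fm UM S0M] by simp
  then have "measure M (UNIV - S0) = 0" using eq by simp
  moreover have "UNIV - S0 \<in> sets M" using UM S0M by auto
  ultimately have "emeasure M (UNIV - S0) = 0"
    using finite_measure.emeasure_eq_measure[OF fm] by simp
  moreover have "{x \<in> space M. \<not> x \<in> S0} = UNIV - S0" using sp by auto
  ultimately show ?thesis by (subst AE_iff_measurable[OF \<open>UNIV - S0 \<in> sets M\<close>])
qed

lemma dense_seq:
  fixes S0 :: "'a::metric_space set"
  assumes "separable_space (subtopology euclidean S0)"
  shows "\<exists>s::nat \<Rightarrow> 'a. \<forall>x\<in>S0. \<forall>d>0. \<exists>i. dist x (s i) < d"
proof -
  obtain C where C: "countable C" "C \<subseteq> S0" and cl: "(subtopology euclidean S0) closure_of C = S0"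
    using assms unfolding separable_space_def by auto
  have clC: "x \<in> closure C" if "x \<in> S0" for x
  proof -
    have "S0 \<inter> C = C" using C(2) by blast
    then show ?thesis using cl that unfolding closure_of_subtopology euclidean_closure_of \<open>S0 \<inter> C = C\<close> by blast
  qed
  show ?thesis
  proof (cases "C = {}")
    case True
    then have "S0 = {}" using clC by auto
    then show ?thesis by auto
  next
    case False
    define s where "s = from_nat_into C"
    have rs: "range s = C" using False C unfolding s_def by simp
    show ?thesis
    proof (intro exI[of _ s] ballI allI impI)
      fix x and d :: real assume "x \<in> S0" "0 < d"
      then obtain y where "y \<in> C" "dist y x < d" using clC closure_approachable by blast
      moreover obtain i where "y = s i" using rs \<open>y \<in> C\<close> by blast
      ultimately have "dist x (s i) < d" by (simp add: dist_commute)
      then show "\<exists>i. dist x (s i) < d" by blast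
    qed
  qed
qed

lemma comb_int:
  assumes "finite_measure M" "sets M = sets (borel :: 'a::metric_space measure)" "g \<in> L1" "h \<in> L1"
  shows "integral\<^sup>L M (\<lambda>x. t * g x + (1 - t) * h x) = t * integral\<^sup>L M g + (1 - t) * integral\<^sup>L M (h :: 'a \<Rightarrow> real)"
proof -
  have "integrable M g" "integrable M h" using L1_integrable assms by blast+
  then show ?thesis by simp
qed

theorem proposition2p2:
  fixes Mp Mn :: "'a::metric_space measure" and k :: norm_kind
  assumes "signed_borel_jordan Mp Mn"
    and "separable_signed Mp Mn"
  shows "\<exists>f\<in>ext_pts (unit_ball k). dual_norm k Mp Mn = signed_integral Mp Mn f"
proof -
  have sMp: "sets Mp = sets borel" and sMn: "sets Mn = sets borel"
    and fMp: "finite_measure Mp" and fMn: "finite_measure Mn"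
    using assms(1) unfolding signed_borel_jordan_def by auto
  obtain S0 where S0B: "S0 \<in> sets borel" and sepS: "separable_space (subtopology euclidean S0)"
    and tv: "total_variation Mp Mn S0 = total_variation Mp Mn UNIV"
    using assms(2) unfolding separable_signed_def by auto
  have sp: "space Mp = UNIV" "space Mn = UNIV"
    using sets_eq_imp_space_eq[OF sMp] sets_eq_imp_space_eq[OF sMn] by simp_all
  have m1: "measure Mp S0 \<le> measure Mp UNIV"
    using finite_measure.finite_measure_mono[OF fMp, of S0 UNIV] sets.top[of Mp] sp by simp
  have m2: "measure Mn S0 \<le> measure Mn UNIV"
    using finite_measure.finite_measure_mono[OF fMn, of S0 UNIV] sets.top[of Mn] sp by simp
  have e1: "measure Mp S0 = measure Mp UNIV" and e2: "measure Mn S0 = measure Mn UNIV"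
    using tv m1 m2 unfolding total_variation_def by linarith+
  have aep: "AE x in Mp. x \<in> S0" by (rule AE_S0[OF fMp sMp S0B e1])
  have aen: "AE x in Mn. x \<in> S0" by (rule AE_S0[OF fMn sMn S0B e2])
  obtain s :: "nat \<Rightarrow> 'a" where dense: "\<forall>x\<in>S0. \<forall>d>0. \<exists>i. dist x (s i) < d"
    using dense_seq[OF sepS] by blast
  define K where "K = (Kc k :: ('a \<Rightarrow> real) set)"
  define I where "I f = signed_integral Mp Mn f" for f
  have KL: "K \<subseteq> L1" unfolding K_def by (rule Kc_L1)
  have cI: "continuous_on K I"
  proof -
    have "continuous_on L1 (\<lambda>f. integral\<^sup>L Mp f)"
      by (rule L1_int_cont[OF fMp sMp aep, where s = s]) (use dense in blast)
    moreover have "continuous_on L1 (\<lambda>f. integral\<^sup>L Mn f)"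
      by (rule L1_int_cont[OF fMn sMn aen, where s = s]) (use dense in blast)
    ultimately have "continuous_on L1 I"
      unfolding I_def signed_integral_def by (rule continuous_on_diff)
    then show ?thesis using KL by (rule continuous_on_subset)
  qed
  have Kc: "compact K" unfolding K_def by (rule compact_Kc)
  have Kcl: "closed K" unfolding K_def by (rule closed_Kc)
  have "(\<lambda>_. 0) \<in> K" unfolding K_def Kc_def L1_def KBL_def by (cases k) simp_all
  then have Kne: "K \<noteq> {}" by blast
  obtain f0 where f0K: "f0 \<in> K" and f0max: "\<forall>g\<in>K. I g \<le> I f0"
    using continuous_attains_sup[OF Kc Kne cI] by blast
  have dn: "dual_norm k Mp Mn = I f0"
    unfolding dual_norm_def unit_ball_eq K_def[symmetric] I_def[symmetric]
    by (rule cSup_eq_maximum) (use f0K f0max in auto)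
  define F where "F = {f \<in> K. I f = I f0}"
  have Fcl: "closed F" unfolding F_def by (rule continuous_closed_preimage_constant[OF cI Kcl])
  have Fc: "compact F"
  proof -
    have "K \<inter> F = F" unfolding F_def by auto
    then show ?thesis using compact_Int_closed[OF Kc Fcl] by simp
  qed
  have Fne: "F \<noteq> {}" using f0K unfolding F_def by auto
  have Fe: "extr K F"
    unfolding extr_def
  proof (intro ballI allI impI)
    fix g h t assume g: "g \<in> K" and h: "h \<in> K" and ct: "0 < t \<and> t < 1 \<and> (\<lambda>x. t * g x + (1 - t) * h x) \<in> F"
    have gL: "g \<in> L1" and hL: "h \<in> L1" using g h KL by auto
    have "I (\<lambda>x. t * g x + (1 - t) * h x) = t * I g + (1 - t) * I h"
      unfolding I_def signed_integral_def comb_int[OF fMp sMp gL hL] comb_int[OF fMn sMn gL hL]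
      by (simp add: algebra_simps)
    moreover have "I (\<lambda>x. t * g x + (1 - t) * h x) = I f0" using ct unfolding F_def by simp
    moreover have "I g \<le> I f0" "I h \<le> I f0" using f0max g h by auto
    ultimately have "I f0 \<le> I g \<and> I f0 \<le> I h"
      using comb_ge[of t "I g" "I f0" "I h"] ct by simp
    then show "g \<in> F \<and> h \<in> F" using g h \<open>I g \<le> I f0\<close> \<open>I h \<le> I f0\<close> unfolding F_def by auto
  qed
  obtain f where fF: "f \<in> F"
    and fext: "\<forall>g\<in>K. \<forall>h\<in>K. \<forall>t. 0 < t \<and> t < 1 \<and> f = (\<lambda>x. t * g x + (1 - t) * h x) \<longrightarrow> g = h"
    using extreme_exists[OF Fc Fcl Fne Fe] by blast
  have fK: "f \<in> K" using fF unfolding F_def by simp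
  have "f \<in> ext_pts K"
    unfolding ext_pts_def using fK fext by (intro CollectI conjI)
  then have "f \<in> ext_pts (unit_ball k)"
    unfolding unit_ball_eq K_def .
  moreover have "dual_norm k Mp Mn = signed_integral Mp Mn f"
    using dn fF unfolding F_def I_def by simp
  ultimately show ?thesis by blast
qed


end
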